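(* Let $n\geq 1$. The assignment $\rho_i\mapsto\sigma_1\sigma_2\cdots\sigma_i$ ($1\leq i\leq n$) extends to a surjective group homomorphism from the group $\langle \rho_1,\dots,\rho_n\mid \rho_1\rho_n\rho_i=\rho_{i+1}\rho_n,\ 1\leq i\leq n-1\rangle$ (isomorphic to $G(n,n+1)$) onto the braid group $\mathcal{B}_{n+1}$.
   Context: $\mathcal{B}_{n+1}$ is the braid group with generators $\sigma_1,\dots,\sigma_n$ and relations $\sigma_i\sigma_{i+1}\sigma_i=\sigma_{i+1}\sigma_i\sigma_{i+1}$ for $1\leq i<n$ and $\sigma_i\sigma_j=\sigma_j\sigma_i$ for $|i-j|>1$. *)

theory Defs
  imports "HOL-Algebra.Group"
begin

text \<open>A word over an alphabet S is a list of letters (a, b) with a in S; b = True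
marks the formal inverse of the generator a.\<close>

type_synonym 'a word = "('a \<times> bool) list"

definition words :: "'a set \<Rightarrow> 'a word set" where
  "words S = {w. set (map fst w) \<subseteq> S}"

definition inv_word :: "'a word \<Rightarrow> 'a word" where
  "inv_word w = rev (map (\<lambda>(a, b). (a, \<not> b)) w)"

inductive pres_eq :: "'a set \<Rightarrow> 'a word set \<Rightarrow> 'a word \<Rightarrow> 'a word \<Rightarrow> bool"
  for S :: "'a set" and R :: "'a word set" where
  refl: "w \<in> words S \<Longrightarrow> pres_eq S R w w"
| sym: "pres_eq S R u v \<Longrightarrow> pres_eq S R v u"
| trans: "pres_eq S R u v \<Longrightarrow> pres_eq S R v w \<Longrightarrow> pres_eq S R u w"
| cancel: "u \<in> words S \<Longrightarrow> v \<in> words S \<Longrightarrow> a \<in> S \<Longrightarrow>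
           pres_eq S R (u @ [(a, b), (a, \<not> b)] @ v) (u @ v)"
| relator: "u \<in> words S \<Longrightarrow> v \<in> words S \<Longrightarrow> r \<in> R \<Longrightarrow> r \<in> words S \<Longrightarrow>
           pres_eq S R (u @ r @ v) (u @ v)"

definition pres_rel :: "'a set \<Rightarrow> 'a word set \<Rightarrow> ('a word \<times> 'a word) set" where
  "pres_rel S R = {(u, v). pres_eq S R u v}"

definition presented_group :: "'a set \<Rightarrow> 'a word set \<Rightarrow> 'a word set monoid" where
  "presented_group S R =
     \<lparr> carrier = words S // pres_rel S R,
       mult = (\<lambda>A B. \<Union>u\<in>A. \<Union>v\<in>B. pres_rel S R `` {u @ v}),
       one = pres_rel S R `` {[]} \<rparr>"

definition pres_class :: "'a set \<Rightarrow> 'a word set \<Rightarrow> 'a word \<Rightarrow> 'a word set" where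
  "pres_class S R w = pres_rel S R `` {w}"

definition gen :: "'a \<Rightarrow> 'a word" where
  "gen a = [(a, False)]"

definition G_relators :: "nat \<Rightarrow> nat word set" where
  "G_relators n = {gen 1 @ gen n @ gen i @ inv_word (gen (i+1) @ gen n) | i. 1 \<le> i \<and> i \<le> n - 1}"

text \<open>Relators of the braid group \<open>B_{n+1}\<close> on generators \<open>\<sigma>_1,\<dots>,\<sigma>_n\<close>.\<close>

definition braid_relators :: "nat \<Rightarrow> nat word set" where
  "braid_relators n =
     {gen i @ gen (i+1) @ gen i @ inv_word (gen (i+1) @ gen i @ gen (i+1)) | i. 1 \<le> i \<and> i < n}
   \<union> {gen i @ gen j @ inv_word (gen j @ gen i) | i j. i \<in> {1..n} \<and> j \<in> {1..n}
         \<and> (i + 1 < j \<or> j + 1 < i)}"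

definition G_group :: "nat \<Rightarrow> nat word set monoid" where
  "G_group n = presented_group {1..n} (G_relators n)"

definition braid_group :: "nat \<Rightarrow> nat word set monoid" where
  "braid_group n = presented_group {1..n} (braid_relators n)"

definition sigma_prefix :: "nat \<Rightarrow> nat word" where
  "sigma_prefix i = concat (map gen [1..<i+1])"

end

theory Submission
  imports Defs
begin

lemma words_append[simp]: "u @ v \<in> words S \<longleftrightarrow> u \<in> words S \<and> v \<in> words S"
  by (auto simp: words_def)
lemma words_Cons[simp]: "x # v \<in> words S \<longleftrightarrow> fst x \<in> S \<and> v \<in> words S"
  by (auto simp: words_def)
lemma words_Nil[simp]: "[] \<in> words S"
  by (auto simp: words_def)
lemma inv_word_Nil[simp]: "inv_word [] = []" by (simp add: inv_word_def)
lemma inv_word_append[simp]: "inv_word (u @ v) = inv_word v @ inv_word u"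
  by (simp add: inv_word_def)
lemma inv_word_Cons[simp]: "inv_word ((a,b) # w) = inv_word w @ [(a, \<not> b)]"
  by (simp add: inv_word_def)
lemma inv_inv[simp]: "inv_word (inv_word w) = w"
  by (induction w) (auto simp: inv_word_def)
lemma inv_word_words[simp]: "inv_word w \<in> words S \<longleftrightarrow> w \<in> words S"
  by (induction w) auto

lemma pres_eq_words: "pres_eq S R u v \<Longrightarrow> u \<in> words S \<and> v \<in> words S"
  by (induction rule: pres_eq.induct) auto

lemma pres_eq_cong:
  "pres_eq S R u v \<Longrightarrow> x \<in> words S \<Longrightarrow> y \<in> words S \<Longrightarrow> pres_eq S R (x@u@y) (x@v@y)"
proof (induction rule: pres_eq.induct)
  case (refl w) then show ?case by (intro pres_eq.refl) simp
next
  case (sym u v) then show ?case by (blast intro: pres_eq.sym)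
next
  case (trans u v w) then show ?case by (blast intro: pres_eq.trans)
next
  case (cancel u v a b)
  have "pres_eq S R ((x@u) @ [(a,b),(a,\<not>b)] @ (v@y)) ((x@u)@(v@y))"
    by (rule pres_eq.cancel) (use cancel in auto)
  then show ?case by simp
next
  case (relator u v r)
  have "pres_eq S R ((x@u) @ r @ (v@y)) ((x@u)@(v@y))"
    by (rule pres_eq.relator) (use relator in auto)
  then show ?case by simp
qed

lemma cong2: "pres_eq S R u u' \<Longrightarrow> pres_eq S R v v' \<Longrightarrow> pres_eq S R (u@v) (u'@v')"
proof -
  assume a: "pres_eq S R u u'" and b: "pres_eq S R v v'"
  have "pres_eq S R ([]@u@v) ([]@u'@v)"
    by (rule pres_eq_cong[OF a]) (use pres_eq_words[OF b] in auto)
  moreover have "pres_eq S R (u'@v@[]) (u'@v'@[])"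
    by (rule pres_eq_cong[OF b]) (use pres_eq_words[OF a] in auto)
  ultimately show ?thesis by (auto intro: pres_eq.trans)
qed

lemma inv_cancel_r: "w \<in> words S \<Longrightarrow> pres_eq S R (w @ inv_word w) []"
proof (induction w)
  case Nil then show ?case by (auto intro: pres_eq.refl)
next
  case (Cons p w)
  obtain a b where p: "p = (a,b)" by (cases p)
  have 1: "pres_eq S R ([(a,b)] @ (w @ inv_word w) @ [(a,\<not>b)]) ([(a,b)] @ [] @ [(a,\<not>b)])"
    by (rule pres_eq_cong) (use Cons p in auto)
  have 2: "pres_eq S R ([] @ [(a,b),(a,\<not>b)] @ []) ([] @ [])"
    by (rule pres_eq.cancel) (use Cons p in auto)
  have h1: "pres_eq S R ((a,b) # w @ inv_word w @ [(a,\<not>b)]) [(a,b),(a,\<not>b)]" using 1 by simp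
  have h2: "pres_eq S R [(a,b),(a,\<not>b)] []" using 2 by simp
  have "pres_eq S R ((a,b) # w @ inv_word w @ [(a,\<not>b)]) []"
    using pres_eq.trans[OF h1 h2] .
  then show ?case by (simp add: p)
qed

lemma inv_cancel_l: "w \<in> words S \<Longrightarrow> pres_eq S R (inv_word w @ w) []"
  using inv_cancel_r[of "inv_word w" S R] by simp

lemma rel_eq: "r \<in> R \<Longrightarrow> r = x @ inv_word y \<Longrightarrow> x \<in> words S \<Longrightarrow> y \<in> words S \<Longrightarrow> pres_eq S R x y"
proof -
  assume r: "r \<in> R" "r = x @ inv_word y" and xy: "x \<in> words S" "y \<in> words S"
  have 1: "pres_eq S R ([] @ r @ y) ([] @ y)"
    by (rule pres_eq.relator) (use r xy in auto)
  have 2: "pres_eq S R (x @ (inv_word y @ y) @ []) (x @ [] @ [])"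
    by (rule pres_eq_cong[OF inv_cancel_l]) (use xy in auto)
  have h1: "pres_eq S R (x @ inv_word y @ y) y" using 1 r by simp
  have h2: "pres_eq S R (x @ inv_word y @ y) x" using 2 by simp
  show ?thesis by (rule pres_eq.trans[OF pres_eq.sym[OF h2] h1])
qed

lemma eq_inv_nil: "pres_eq S R x y \<Longrightarrow> pres_eq S R (x @ inv_word y) []"
proof -
  assume a: "pres_eq S R x y"
  have "pres_eq S R (x @ inv_word y) (y @ inv_word y)"
    by (rule cong2[OF a pres_eq.refl]) (use pres_eq_words[OF a] in auto)
  moreover have "pres_eq S R (y @ inv_word y) []"
    using inv_cancel_r pres_eq_words[OF a] by blast
  ultimately show ?thesis by (rule pres_eq.trans)
qed

lemma class_eq: "pres_rel S R `` {w} = {v. pres_eq S R w v}"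
  by (auto simp: pres_rel_def)

lemma class_cong: "pres_eq S R u v \<Longrightarrow> pres_rel S R `` {u} = pres_rel S R `` {v}"
proof -
  assume a: "pres_eq S R u v"
  have "pres_eq S R u w = pres_eq S R v w" for w
    using pres_eq.trans[OF pres_eq.sym[OF a], of w] pres_eq.trans[OF a, of w] by blast
  then show ?thesis unfolding class_eq by blast
qed

lemma carrier_pres: "carrier (presented_group S R) = {pres_rel S R `` {w} | w. w \<in> words S}"
  by (auto simp: presented_group_def quotient_def)

lemma mult_pres:
  assumes "u \<in> words S" "v \<in> words S"
  shows "pres_rel S R``{u} \<otimes>\<^bsub>presented_group S R\<^esub> pres_rel S R``{v} = pres_rel S R``{u@v}"
proof -
  have A: "\<forall>u'\<in>pres_rel S R``{u}. \<forall>v'\<in>pres_rel S R``{v}.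
           pres_rel S R``{u'@v'} = pres_rel S R``{u@v}"
  proof (intro ballI)
    fix u' v' assume "u' \<in> pres_rel S R``{u}" "v' \<in> pres_rel S R``{v}"
    then have "pres_eq S R u u'" "pres_eq S R v v'" unfolding class_eq by simp_all
    then have "pres_eq S R (u'@v') (u@v)" by (intro pres_eq.sym[OF cong2])
    then show "pres_rel S R``{u'@v'} = pres_rel S R``{u@v}" by (rule class_cong)
  qed
  have ne: "pres_rel S R``{u} \<noteq> {}" "pres_rel S R``{v} \<noteq> {}"
    using assms pres_eq.refl[of u S R] pres_eq.refl[of v S R] unfolding class_eq by blast+
  have "(\<Union>u'\<in>pres_rel S R``{u}. \<Union>v'\<in>pres_rel S R``{v}. pres_rel S R``{u'@v'})
       = (\<Union>u'\<in>pres_rel S R``{u}. \<Union>v'\<in>pres_rel S R``{v}. pres_rel S R``{u@v})"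
    using A by (intro SUP_cong refl) simp_all
  also have "\<dots> = pres_rel S R``{u@v}" using ne by simp
  finally show ?thesis unfolding presented_group_def by simp
qed

definition phi :: "('a \<Rightarrow> 'b word) \<Rightarrow> 'a word \<Rightarrow> 'b word" where
  "phi f w = concat (map (\<lambda>(a,b). if b then inv_word (f a) else f a) w)"

lemma phi_Nil[simp]: "phi f [] = []" by (simp add: phi_def)
lemma phi_append[simp]: "phi f (u @ v) = phi f u @ phi f v" by (simp add: phi_def)
lemma phi_Cons[simp]: "phi f ((a,b) # w) = (if b then inv_word (f a) else f a) @ phi f w"
  by (simp add: phi_def)
lemma phi_inv: "phi f (inv_word w) = inv_word (phi f w)"
  by (induction w) auto
lemma phi_words: "\<forall>a\<in>S. f a \<in> words T \<Longrightarrow> w \<in> words S \<Longrightarrow> phi f w \<in> words T"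
  by (induction w) auto

lemma phi_resp:
  assumes f: "\<forall>a\<in>S. f a \<in> words T"
    and rel: "\<forall>r\<in>R. r \<in> words S \<longrightarrow> pres_eq T R' (phi f r) []"
  shows "pres_eq S R u v \<Longrightarrow> pres_eq T R' (phi f u) (phi f v)"
proof (induction rule: pres_eq.induct)
  case (refl w) then show ?case using phi_words[OF f] by (auto intro: pres_eq.refl)
next
  case (sym u v) then show ?case by (blast intro: pres_eq.sym)
next
  case (trans u v w) then show ?case by (blast intro: pres_eq.trans)
next
  case (cancel u v a b)
  have fa: "f a \<in> words T" using f cancel by auto
  have wu: "phi f u \<in> words T" "phi f v \<in> words T" using phi_words[OF f] cancel by auto
  show ?case
  proof (cases b)
    case True
    have "pres_eq T R' (phi f u @ (inv_word (f a) @ f a) @ phi f v) (phi f u @ [] @ phi f v)"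
      by (rule pres_eq_cong[OF inv_cancel_l[OF fa]]) (use wu in auto)
    then show ?thesis using True by simp
  next
    case False
    have "pres_eq T R' (phi f u @ (f a @ inv_word (f a)) @ phi f v) (phi f u @ [] @ phi f v)"
      by (rule pres_eq_cong[OF inv_cancel_r[OF fa]]) (use wu in auto)
    then show ?thesis using False by simp
  qed
next
  case (relator u v r)
  have wu: "phi f u \<in> words T" "phi f v \<in> words T" using phi_words[OF f] relator by auto
  have "pres_eq T R' (phi f u @ phi f r @ phi f v) (phi f u @ [] @ phi f v)"
    by (rule pres_eq_cong) (use wu rel relator in auto)
  then show ?case by simp
qed

lemma img_class:
  assumes f: "\<forall>a\<in>S. f a \<in> words T"
    and rel: "\<forall>r\<in>R. r \<in> words S \<longrightarrow> pres_eq T R' (phi f r) []"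
    and w: "w \<in> words S"
  shows "pres_rel T R' `` (phi f ` (pres_rel S R `` {w})) = pres_rel T R' `` {phi f w}"
proof
  show "pres_rel T R' `` (phi f ` (pres_rel S R `` {w})) \<subseteq> pres_rel T R' `` {phi f w}"
  proof
    fix z assume "z \<in> pres_rel T R' `` (phi f ` (pres_rel S R `` {w}))"
    then obtain u where u: "pres_eq S R w u" "pres_eq T R' (phi f u) z"
      by (auto simp: pres_rel_def)
    have "pres_eq T R' (phi f w) (phi f u)" using phi_resp[OF f rel u(1)] .
    then have "pres_eq T R' (phi f w) z" using u(2) by (rule pres_eq.trans)
    then show "z \<in> pres_rel T R' `` {phi f w}" by (simp add: pres_rel_def)
  qed
  show "pres_rel T R' `` {phi f w} \<subseteq> pres_rel T R' `` (phi f ` (pres_rel S R `` {w}))"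
    using w by (auto simp: pres_rel_def intro: pres_eq.refl)
qed

definition pw :: "nat list \<Rightarrow> nat word" where
  "pw xs = map (\<lambda>a. (a, False)) xs"

lemma pw_append[simp]: "pw (xs @ ys) = pw xs @ pw ys" by (simp add: pw_def)
lemma pw_Cons: "pw (x # ys) = [(x,False)] @ pw ys" by (simp add: pw_def)
lemma pw_words[simp]: "pw xs \<in> words S \<longleftrightarrow> set xs \<subseteq> S" by (induction xs) (auto simp: pw_def)
lemma gen_pw: "gen a = pw [a]" by (simp add: gen_def pw_def)
lemma sigma_prefix_pw: "sigma_prefix i = pw [1..<i+1]"
proof -
  have "\<And>xs. concat (map gen xs) = pw xs" by (induct_tac xs) (auto simp: gen_def pw_def)
  then show ?thesis by (simp add: sigma_prefix_def)
qed

abbreviation BE where "BE n \<equiv> pres_eq {1..n} (braid_relators n)"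

lemma braid3: "1 \<le> i \<Longrightarrow> i < n \<Longrightarrow> BE n (pw [i,i+1,i]) (pw [i+1,i,i+1])"
  by (rule rel_eq[where r = "pw [i,i+1,i] @ inv_word (pw [i+1,i,i+1])"])
     (auto simp: braid_relators_def gen_def pw_def)

lemma braid_far: "i \<in> {1..n} \<Longrightarrow> j \<in> {1..n} \<Longrightarrow> i + 1 < j \<or> j + 1 < i \<Longrightarrow> BE n (pw [i,j]) (pw [j,i])"
  by (rule rel_eq[where r = "pw [i,j] @ inv_word (pw [j,i])"])
     (auto simp: braid_relators_def gen_def pw_def)

lemma comm: "a \<in> {1..n} \<Longrightarrow> \<forall>y\<in>set ys. y \<in> {1..n} \<and> (a+1 < y \<or> y+1 < a)
   \<Longrightarrow> BE n (pw (a # ys)) (pw (ys @ [a]))"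
proof (induction ys)
  case Nil then show ?case by (auto intro: pres_eq.refl)
next
  case (Cons y ys)
  have 1: "BE n (pw [a,y] @ pw ys) (pw [y,a] @ pw ys)"
    by (rule cong2[OF braid_far pres_eq.refl]) (use Cons in auto)
  have 2: "BE n ([(y,False)] @ pw (a#ys) @ []) ([(y,False)] @ pw (ys@[a]) @ [])"
    by (rule pres_eq_cong) (use Cons in auto)
  have h1: "BE n (pw (a # y # ys)) ([(y,False)] @ pw (a#ys) @ [])" using 1 by (simp add: pw_def)
  have "pw ((y # ys) @ [a]) \<in> words {1..n}" using Cons by auto
  from pres_eq.refl[OF this] have h2: "BE n ([(y,False)] @ pw (ys@[a]) @ []) (pw ((y # ys) @ [a]))"
    by (simp add: pw_def)
  from pres_eq.trans[OF pres_eq.trans[OF h1 2] h2] show ?case .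
qed

lemma lemA:
  assumes j: "1 \<le> j" "j < n"
  shows "BE n (pw ([1..<n+1] @ [j])) (pw ((j+1) # [1..<n+1]))"
proof -
  define L where "L = [1..<j]"
  define R where "R = [j+2..<n+1]"
  have split: "[1..<n+1] = L @ [j, j+1] @ R"
  proof -
    have "[1..<n+1] = [1..<j] @ [j..<n+1]"
      using j upt_add_eq_append[of 1 j "n+1-j"] by simp
    also have "[j..<n+1] = j # (j+1) # [j+2..<n+1]" using j by (simp add: upt_conv_Cons)
    finally show ?thesis by (simp add: L_def R_def)
  qed
  have wL: "set L \<subseteq> {1..n}" and wR: "set R \<subseteq> {1..n}" using j by (auto simp: L_def R_def)
  have 1: "BE n (pw (L @ [j, j+1]) @ pw (R @ [j]) @ []) (pw (L @ [j, j+1]) @ pw (j # R) @ [])"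
    by (rule pres_eq_cong[OF pres_eq.sym[OF comm]]) (use j wL wR in \<open>auto simp: R_def\<close>)
  have 2: "BE n (pw L @ pw [j,j+1,j] @ pw R) (pw L @ pw [j+1,j,j+1] @ pw R)"
    by (rule pres_eq_cong[OF braid3]) (use j wL wR in auto)
  have 3: "BE n ([] @ pw (L @ [j+1]) @ pw [j,j+1] @ pw R) ([] @ pw ((j+1) # L) @ pw [j,j+1] @ pw R)"
    by (rule pres_eq_cong[OF pres_eq.sym[OF comm]]) (use j wL wR in \<open>auto simp: L_def\<close>)
  have e1: "pw ([1..<n+1] @ [j]) = pw (L @ [j, j+1]) @ pw (R @ [j]) @ []"
    by (simp only: split) (simp add: pw_def)
  have e2: "pw (L @ [j, j+1]) @ pw (j # R) @ [] = pw L @ pw [j,j+1,j] @ pw R"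
    by (simp add: pw_def)
  have e3: "pw L @ pw [j+1,j,j+1] @ pw R = [] @ pw (L @ [j+1]) @ pw [j,j+1] @ pw R"
    by (simp add: pw_def)
  have e4: "[] @ pw ((j+1) # L) @ pw [j,j+1] @ pw R = pw ((j+1) # [1..<n+1])"
    by (simp only: split) (simp add: pw_def)
  have h1: "BE n (pw ([1..<n+1] @ [j])) (pw L @ pw [j,j+1,j] @ pw R)" using 1 unfolding e1 e2 .
  have h3: "BE n (pw L @ pw [j+1,j,j+1] @ pw R) (pw ((j+1) # [1..<n+1]))" using 3 unfolding e3[symmetric] e4 .
  show ?thesis by (rule pres_eq.trans[OF pres_eq.trans[OF h1 2] h3])
qed

lemma lemB: "i < n \<Longrightarrow> BE n (pw ([1..<n+1] @ [1..<i+1])) (pw ([2..<i+2] @ [1..<n+1]))"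
proof (induction i)
  case 0
  have "pw [1..<n+1] \<in> words {1..n}" by auto
  from pres_eq.refl[OF this] show ?case by simp
next
  case (Suc i)
  have 1: "BE n (pw ([1..<n+1] @ [1..<i+1]) @ pw [i+1]) (pw ([2..<i+2] @ [1..<n+1]) @ pw [i+1])"
    by (rule cong2[OF _ pres_eq.refl]) (use Suc in auto)
  have 2: "BE n (pw [2..<i+2] @ pw ([1..<n+1] @ [i+1]) @ []) (pw [2..<i+2] @ pw ((i+1+1) # [1..<n+1]) @ [])"
    by (rule pres_eq_cong[OF lemA]) (use Suc in auto)
  have e1: "pw ([1..<n+1] @ [1..<Suc i+1]) = pw ([1..<n+1] @ [1..<i+1]) @ pw [i+1]" by simp
  have e2: "pw ([2..<i+2] @ [1..<n+1]) @ pw [i+1] = pw [2..<i+2] @ pw ([1..<n+1] @ [i+1]) @ []" by simp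
  have e3: "pw [2..<i+2] @ pw ((i+1+1) # [1..<n+1]) @ [] = pw ([2..<Suc i+2] @ [1..<n+1])"
    by (simp add: pw_def)
  have h1: "BE n (pw ([1..<n+1] @ [1..<Suc i+1])) (pw [2..<i+2] @ pw ([1..<n+1] @ [i+1]) @ [])"
    using 1 unfolding e1 e2 .
  have h2: "BE n (pw [2..<i+2] @ pw ([1..<n+1] @ [i+1]) @ []) (pw ([2..<Suc i+2] @ [1..<n+1]))"
    using 2 unfolding e3 .
  show ?case by (rule pres_eq.trans[OF h1 h2])
qed

lemma key: "1 \<le> i \<Longrightarrow> i < n \<Longrightarrow>
  BE n (sigma_prefix 1 @ sigma_prefix n @ sigma_prefix i) (sigma_prefix (i+1) @ sigma_prefix n)"
proof -
  assume i: "1 \<le> i" "i < n"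
  have "BE n ([(1,False)] @ pw ([1..<n+1] @ [1..<i+1]) @ []) ([(1,False)] @ pw ([2..<i+2] @ [1..<n+1]) @ [])"
    by (rule pres_eq_cong[OF lemB]) (use i in auto)
  moreover have "[1..<i+1+1] = 1 # [2..<i+2]" by (simp add: upt_conv_Cons numeral_2_eq_2)
  moreover have "sigma_prefix 1 = [(1,False)]" by (simp add: sigma_prefix_def gen_def)
  ultimately show ?thesis unfolding sigma_prefix_pw[of n] sigma_prefix_pw[of i] sigma_prefix_pw[of "i+1"]
    by (simp add: pw_def)
qed

theorem proposition4p3:
  fixes n :: nat
  assumes "n \<ge> 1"
  shows "\<exists>h \<in> hom (G_group n) (braid_group n).
           (\<forall>i \<in> {1..n}. h (pres_class {1..n} (G_relators n) (gen i))
                          = pres_class {1..n} (braid_relators n) (sigma_prefix i))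
         \<and> h ` carrier (G_group n) = carrier (braid_group n)"
proof -
  let ?S = "{1..n} :: nat set"
  let ?R = "G_relators n"
  let ?T = "braid_relators n"
  let ?f = "sigma_prefix"
  have f: "\<forall>a\<in>?S. ?f a \<in> words ?S" by (auto simp: sigma_prefix_pw)
  have rel: "\<forall>r\<in>?R. r \<in> words ?S \<longrightarrow> BE n (phi ?f r) []"
  proof (intro ballI impI)
    fix r assume "r \<in> ?R"
    then obtain i where i: "1 \<le> i" "i \<le> n - 1"
      and r: "r = gen 1 @ gen n @ gen i @ inv_word (gen (i+1) @ gen n)"
      by (auto simp: G_relators_def)
    have pg: "phi ?f (gen a) = ?f a" for a by (simp add: gen_def)
    have "phi ?f r = (?f 1 @ ?f n @ ?f i) @ inv_word (?f (i+1) @ ?f n)"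
      by (simp add: r phi_inv pg)
    then show "BE n (phi ?f r) []" using eq_inv_nil[OF key[of i n]] i assms by simp
  qed
  define h where "h A = pres_rel ?S ?T `` (phi ?f ` A)" for A
  have hc: "h (pres_rel ?S ?R `` {w}) = pres_rel ?S ?T `` {phi ?f w}" if "w \<in> words ?S" for w
    unfolding h_def by (rule img_class[OF f rel that])
  have hom: "h \<in> hom (G_group n) (braid_group n)"
  proof (rule homI)
    fix x assume "x \<in> carrier (G_group n)"
    then obtain w where "w \<in> words ?S" "x = pres_rel ?S ?R `` {w}"
      by (auto simp: G_group_def carrier_pres)
    then show "h x \<in> carrier (braid_group n)"
      using hc phi_words[OF f] by (auto simp: braid_group_def carrier_pres)
  next
    fix x y assume "x \<in> carrier (G_group n)" "y \<in> carrier (G_group n)"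
    then obtain u v where uv: "u \<in> words ?S" "x = pres_rel ?S ?R `` {u}"
       "v \<in> words ?S" "y = pres_rel ?S ?R `` {v}"
      by (auto simp: G_group_def carrier_pres)
    have "h (x \<otimes>\<^bsub>G_group n\<^esub> y) = h (pres_rel ?S ?R `` {u @ v})"
      using uv unfolding G_group_def by (simp add: mult_pres)
    also have "\<dots> = pres_rel ?S ?T `` {phi ?f u @ phi ?f v}" using uv hc[of "u@v"] by simp
    also have "\<dots> = pres_rel ?S ?T `` {phi ?f u} \<otimes>\<^bsub>braid_group n\<^esub> pres_rel ?S ?T `` {phi ?f v}"
      unfolding braid_group_def using uv phi_words[OF f] by (simp add: mult_pres)
    also have "\<dots> = h x \<otimes>\<^bsub>braid_group n\<^esub> h y" using uv hc by simp
    finally show "h (x \<otimes>\<^bsub>G_group n\<^esub> y) = h x \<otimes>\<^bsub>braid_group n\<^esub> h y" .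
  qed
  have pre: "\<exists>w\<in>words ?S. BE n (phi ?f w) v" if "v \<in> words ?S" for v
    using that
  proof (induction v)
    case Nil
    have "BE n (phi ?f []) []" by (simp add: pres_eq.refl)
    then show ?case using words_Nil by blast
  next
    case (Cons p v)
    obtain a b where p: "p = (a,b)" by (cases p)
    have a: "a \<in> ?S" using Cons p by auto
    obtain w where w: "w \<in> words ?S" "BE n (phi ?f w) v" using Cons by auto
    have "\<exists>wa\<in>words ?S. BE n (phi ?f wa) [(a,b)]"
    proof (cases "a = 1")
      case True
      have "[(a,b)] \<in> words ?S" using a by simp
      from pres_eq.refl[OF this] True a show ?thesis
        by (intro bexI[of _ "[(a,b)]"]) (auto simp: sigma_prefix_def gen_def)
    next
      case False
      then have a2: "a \<ge> 2" using a by auto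
      have sp: "?f a = ?f (a-1) @ [(a,False)]"
        using a2 by (simp add: sigma_prefix_pw pw_def)
      have wf: "?f (a-1) \<in> words ?S" using a by (auto simp: sigma_prefix_pw)
      show ?thesis
      proof (cases b)
        case True
        have "BE n ([(a,True)] @ (inv_word (?f (a-1)) @ ?f (a-1)) @ []) ([(a,True)] @ [] @ [])"
          by (rule pres_eq_cong[OF inv_cancel_l[OF wf]]) (use a in auto)
        then show ?thesis using True a a2
          by (intro bexI[of _ "[(a,True),(a-1,False)]"]) (auto simp: sp)
      next
        case False
        have "BE n ([] @ (inv_word (?f (a-1)) @ ?f (a-1)) @ [(a,False)]) ([] @ [] @ [(a,False)])"
          by (rule pres_eq_cong[OF inv_cancel_l[OF wf]]) (use a in auto)
        then show ?thesis using False a a2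
          by (intro bexI[of _ "[(a-1,True),(a,False)]"]) (auto simp: sp)
      qed
    qed
    then obtain wa where wa: "wa \<in> words ?S" "BE n (phi ?f wa) [(a,b)]" by blast
    have "BE n (phi ?f wa @ phi ?f w) ([(a,b)] @ v)" by (rule cong2[OF wa(2) w(2)])
    then show ?case using wa w p by (intro bexI[of _ "wa @ w"]) auto
  qed
  have surj: "h ` carrier (G_group n) = carrier (braid_group n)"
  proof
    show "h ` carrier (G_group n) \<subseteq> carrier (braid_group n)"
      using hom by (auto simp: hom_def)
    show "carrier (braid_group n) \<subseteq> h ` carrier (G_group n)"
    proof
      fix y assume "y \<in> carrier (braid_group n)"
      then obtain v where v: "v \<in> words ?S" "y = pres_rel ?S ?T `` {v}"
        by (auto simp: braid_group_def carrier_pres)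
      obtain w where w: "w \<in> words ?S" "BE n (phi ?f w) v" using pre[OF v(1)] by blast
      have "y = h (pres_rel ?S ?R `` {w})" using v w hc class_cong by metis
      moreover have "pres_rel ?S ?R `` {w} \<in> carrier (G_group n)"
        using w by (auto simp: G_group_def carrier_pres)
      ultimately show "y \<in> h ` carrier (G_group n)" by blast
    qed
  qed
  have gens: "\<forall>i \<in> {1..n}. h (pres_class ?S ?R (gen i)) = pres_class ?S ?T (sigma_prefix i)"
  proof
    fix i assume i: "i \<in> {1..n}"
    have "gen i \<in> words ?S" using i by (simp add: gen_def)
    from hc[OF this] show "h (pres_class ?S ?R (gen i)) = pres_class ?S ?T (sigma_prefix i)"
      by (simp add: pres_class_def gen_def)
  qed
  show ?thesis using hom gens surj by blast
qed

end
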